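(* Let $\mathcal{E}\in\mathbb{R}^{N_1\times N_2\times N_3}$ be any tensor with at most $\mathrm{deg}_{max}(\mathcal{E})$ nonzero entries per horizontal/lateral slice and at least $\mathrm{deg}_{min}(\mathcal{E})$ nonzero entries per horizontal/lateral slice. Then $$\mathrm{deg}_{min}(\mathcal{E})\le\mu(\mathcal{E})\le\mathrm{deg}_{max}(\mathcal{E}).$$
   Context: Horizontal slices of $\mathcal{E}$ are $\mathcal{E}(i,:,:)$, $1\le i\le N_1$, and lateral slices are $\mathcal{E}(:,j,:)$, $1\le j\le N_2$. For $\mathcal{A}\in\mathbb{R}^{N_1\times N_2\times N_3}$ with frontal slices $A^{(k)}=\mathcal{A}(:,:,k)$, $\mathrm{bcirc}(\mathcal{A})\in\mathbb{R}^{N_1N_3\times N_2N_3}$ is the block circulant matrix whose $(i,j)$ block is $A^{(((i-j)\bmod N_3)+1)}$, and the tensor spectral norm is $\|\mathcal{A}\|=\|\mathrm{bcirc}(\mathcal{A})\|$ (largest singular value). $\|\mathcal{A}\|_\infty$ is the maximum absolute entry. $\Omega(\mathcal{E})=\{\mathcal{N}\in\mathbb{R}^{N_1\times N_2\times N_3}:\mathrm{support}(\mathcal{N})\subseteq\mathrm{support}(\mathcal{E})\}$, support being the set of indices of nonzero entries, and $\mu(\mathcal{E})=\max_{\mathcal{N}\in\Omega(\mathcal{E}),\|\mathcal{N}\|_\infty\le1}\|\mathcal{N}\|$. *)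

theory Defs
  imports Complex_Main
begin

text \<open>A real tensor of size N1 x N2 x N3 is represented as a function
  nat => nat => nat => real, of which only the entries with indices
  i < N1, j < N2, k < N3 (0-based) are relevant.\<close>

type_synonym tensor3 = "nat \<Rightarrow> nat \<Rightarrow> nat \<Rightarrow> real"

text \<open>Row index p*N1 + i (p < N3, i < N1), column index
  q*N2 + j (q < N3, j < N2); the (p,q) block is the frontal slice
  A(:,:,(p - q) mod N3) (0-based).\<close>

definition bcirc :: "nat \<Rightarrow> nat \<Rightarrow> nat \<Rightarrow> tensor3 \<Rightarrow> nat \<Rightarrow> nat \<Rightarrow> real" where
  "bcirc N1 N2 N3 A r c =
     A (r mod N1) (c mod N2) (nat ((int (r div N1) - int (c div N2)) mod int N3))"

definition mat_spec_norm :: "nat \<Rightarrow> nat \<Rightarrow> (nat \<Rightarrow> nat \<Rightarrow> real) \<Rightarrow> real" where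
  "mat_spec_norm m n B =
     Sup {sqrt (\<Sum>r<m. (\<Sum>c<n. B r c * x c)\<^sup>2) | x. (\<Sum>c<n. (x c)\<^sup>2) \<le> 1}"

definition tensor_spec_norm :: "nat \<Rightarrow> nat \<Rightarrow> nat \<Rightarrow> tensor3 \<Rightarrow> real" where
  "tensor_spec_norm N1 N2 N3 A = mat_spec_norm (N1 * N3) (N2 * N3) (bcirc N1 N2 N3 A)"

text \<open>Omega(E) intersected with the unit ball of the max-entry norm:
  tensors supported in support(E) with all entries of absolute value at most 1.\<close>

definition Omega_inf :: "nat \<Rightarrow> nat \<Rightarrow> nat \<Rightarrow> tensor3 \<Rightarrow> tensor3 set" where
  "Omega_inf N1 N2 N3 E =
     {N. \<forall>i<N1. \<forall>j<N2. \<forall>k<N3. (E i j k = 0 \<longrightarrow> N i j k = 0) \<and> \<bar>N i j k\<bar> \<le> 1}"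

definition mu :: "nat \<Rightarrow> nat \<Rightarrow> nat \<Rightarrow> tensor3 \<Rightarrow> real" where
  "mu N1 N2 N3 E = Sup (tensor_spec_norm N1 N2 N3 ` Omega_inf N1 N2 N3 E)"

definition nnz_horiz :: "nat \<Rightarrow> nat \<Rightarrow> tensor3 \<Rightarrow> nat \<Rightarrow> nat" where
  "nnz_horiz N2 N3 E i = card {(j, k). j < N2 \<and> k < N3 \<and> E i j k \<noteq> 0}"

definition nnz_lat :: "nat \<Rightarrow> nat \<Rightarrow> tensor3 \<Rightarrow> nat \<Rightarrow> nat" where
  "nnz_lat N1 N3 E j = card {(i, k). i < N1 \<and> k < N3 \<and> E i j k \<noteq> 0}"

definition slice_counts :: "nat \<Rightarrow> nat \<Rightarrow> nat \<Rightarrow> tensor3 \<Rightarrow> nat set" where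
  "slice_counts N1 N2 N3 E = nnz_horiz N2 N3 E ` {..<N1} \<union> nnz_lat N1 N3 E ` {..<N2}"

definition deg_max :: "nat \<Rightarrow> nat \<Rightarrow> nat \<Rightarrow> tensor3 \<Rightarrow> nat" where
  "deg_max N1 N2 N3 E = Max (slice_counts N1 N2 N3 E)"

definition deg_min :: "nat \<Rightarrow> nat \<Rightarrow> nat \<Rightarrow> tensor3 \<Rightarrow> nat" where
  "deg_min N1 N2 N3 E = Min (slice_counts N1 N2 N3 E)"

end

theory Submission imports Defs "HOL-Analysis.Analysis" begin
lemma bij_grid:
  "bij_betw (\<lambda>(q,j). q*n+j) ({..<m}\<times>{..<n}) {..<(n::nat)*m}"
proof (rule bij_betw_byWitness[where f'="\<lambda>c. (c div n, c mod n)"])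
  show "\<forall>a\<in>{..<m}\<times>{..<n}. (\<lambda>c. (c div n, c mod n)) ((\<lambda>(q,j). q*n+j) a) = a" by auto
  show "\<forall>a'\<in>{..<n*m}. (\<lambda>(q,j). q*n+j) ((\<lambda>c. (c div n, c mod n)) a') = a'" by auto
  show "(\<lambda>(q,j). q*n+j) ` ({..<m}\<times>{..<n}) \<subseteq> {..<n*m}"
  proof clarsimp
    fix q j assume "q<m" "j<n"
    then have "q*n+j < q*n+n" by simp
    also have "\<dots> = (q+1)*n" by simp
    also have "\<dots> \<le> m*n" using \<open>q<m\<close> by (intro mult_right_mono) auto
    finally show "q*n+j < n*m" by (simp add: mult.commute)
  qed
  show "(\<lambda>c. (c div n, c mod n)) ` {..<n*m} \<subseteq> {..<m}\<times>{..<n}"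
  proof clarsimp
    fix c assume "c < n*m"
    then have "n > 0" by (cases n) auto
    then show "c div n < m \<and> c mod n < n" using \<open>c<n*m\<close>
      by (simp add: div_less_iff_less_mult mult.commute)
  qed
qed

lemma sum_grid:
  "(\<Sum>c<(n::nat)*m. f c) = (\<Sum>q<m. \<Sum>j<n. f (q*n+j))"
proof -
  have "(\<Sum>c<n*m. f c) = (\<Sum>x\<in>{..<m}\<times>{..<n}. f ((\<lambda>(q,j). q*n+j) x))"
    using sum.reindex_bij_betw[OF bij_grid, of f] by simp
  also have "\<dots> = (\<Sum>q<m. \<Sum>j<n. f (q*n+j))"
    by (simp add: sum.cartesian_product split_def)
  finally show ?thesis .
qed

lemma bij_sub:
  assumes "N > 0"
  shows "bij_betw (\<lambda>q. nat ((int p - int q) mod int N)) {..<N} {..<N}"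
proof (rule bij_betw_byWitness[where f'="\<lambda>q. nat ((int p - int q) mod int N)"])
  show "\<forall>a\<in>{..<N}. nat ((int p - int (nat ((int p - int a) mod int N))) mod int N) = a"
  proof
    fix a assume "a \<in> {..<N}"
    have "(int p - int (nat ((int p - int a) mod int N))) mod int N = (int p - ((int p - int a) mod int N)) mod int N"
      using assms by simp
    also have "\<dots> = (int p - (int p - int a)) mod int N" by (simp add: mod_diff_right_eq)
    also have "\<dots> = int a" using \<open>a \<in> {..<N}\<close> by simp
    finally show "nat ((int p - int (nat ((int p - int a) mod int N))) mod int N) = a" by simp
  qed
  then show "\<forall>a\<in>{..<N}. nat ((int p - int (nat ((int p - int a) mod int N))) mod int N) = a" .
  show "(\<lambda>q. nat ((int p - int q) mod int N)) ` {..<N} \<subseteq> {..<N}"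
    using assms by (auto simp: nat_less_iff)
  then show "(\<lambda>q. nat ((int p - int q) mod int N)) ` {..<N} \<subseteq> {..<N}" .
qed

lemma bij_sub2:
  assumes "N > 0"
  shows "bij_betw (\<lambda>p. nat ((int p - int q) mod int N)) {..<N} {..<N}"
proof (rule bij_betw_byWitness[where f'="\<lambda>k. nat ((int k + int q) mod int N)"])
  show "\<forall>a\<in>{..<N}. nat ((int (nat ((int a - int q) mod int N)) + int q) mod int N) = a"
  proof
    fix a assume "a \<in> {..<N}"
    have "(int (nat ((int a - int q) mod int N)) + int q) mod int N = ((int a - int q) mod int N + int q) mod int N"
      using assms by simp
    also have "\<dots> = (int a - int q + int q) mod int N" by (simp add: mod_add_left_eq)
    also have "\<dots> = int a" using \<open>a \<in> {..<N}\<close> by simp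
    finally show "nat ((int (nat ((int a - int q) mod int N)) + int q) mod int N) = a" by simp
  qed
  show "\<forall>a\<in>{..<N}. nat ((int (nat ((int a + int q) mod int N)) - int q) mod int N) = a"
  proof
    fix a assume "a \<in> {..<N}"
    have "(int (nat ((int a + int q) mod int N)) - int q) mod int N = ((int a + int q) mod int N - int q) mod int N"
      using assms by simp
    also have "\<dots> = (int a + int q - int q) mod int N" by (simp add: mod_diff_left_eq)
    also have "\<dots> = int a" using \<open>a \<in> {..<N}\<close> by simp
    finally show "nat ((int (nat ((int a + int q) mod int N)) - int q) mod int N) = a" by simp
  qed
  show "(\<lambda>p. nat ((int p - int q) mod int N)) ` {..<N} \<subseteq> {..<N}"
    using assms by (auto simp: nat_less_iff)
  show "(\<lambda>k. nat ((int k + int q) mod int N)) ` {..<N} \<subseteq> {..<N}"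
    using assms by (auto simp: nat_less_iff)
qed

lemma row_sum:
  assumes "N1 > 0" "N2 > 0" "N3 > 0" "r < N1*N3"
  shows "(\<Sum>c<N2*N3. g (bcirc N1 N2 N3 A r c)) = (\<Sum>j<N2. \<Sum>k<N3. g (A (r mod N1) j k))"
proof -
  have "(\<Sum>c<N2*N3. g (bcirc N1 N2 N3 A r c))
      = (\<Sum>q<N3. \<Sum>j<N2. g (A (r mod N1) j (nat ((int (r div N1) - int q) mod int N3))))"
    unfolding sum_grid using assms(2) by (simp add: bcirc_def)
  also have "\<dots> = (\<Sum>j<N2. \<Sum>q<N3. g (A (r mod N1) j (nat ((int (r div N1) - int q) mod int N3))))"
    by (rule sum.swap)
  also have "\<dots> = (\<Sum>j<N2. \<Sum>k<N3. g (A (r mod N1) j k))"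
  proof (rule sum.cong[OF refl])
    fix j
    show "(\<Sum>q<N3. g (A (r mod N1) j (nat ((int (r div N1) - int q) mod int N3)))) = (\<Sum>k<N3. g (A (r mod N1) j k))"
      using sum.reindex_bij_betw[OF bij_sub[OF assms(3), of "r div N1"], of "\<lambda>k. g (A (r mod N1) j k)"]
      by simp
  qed
  finally show ?thesis .
qed

lemma col_sum:
  assumes "N1 > 0" "N2 > 0" "N3 > 0" "c < N2*N3"
  shows "(\<Sum>r<N1*N3. g (bcirc N1 N2 N3 A r c)) = (\<Sum>i<N1. \<Sum>k<N3. g (A i (c mod N2) k))"
proof -
  have "(\<Sum>r<N1*N3. g (bcirc N1 N2 N3 A r c))
      = (\<Sum>p<N3. \<Sum>i<N1. g (A i (c mod N2) (nat ((int p - int (c div N2)) mod int N3))))"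
    unfolding sum_grid using assms(1) by (simp add: bcirc_def)
  also have "\<dots> = (\<Sum>i<N1. \<Sum>p<N3. g (A i (c mod N2) (nat ((int p - int (c div N2)) mod int N3))))"
    by (rule sum.swap)
  also have "\<dots> = (\<Sum>i<N1. \<Sum>k<N3. g (A i (c mod N2) k))"
  proof (rule sum.cong[OF refl])
    fix i
    show "(\<Sum>p<N3. g (A i (c mod N2) (nat ((int p - int (c div N2)) mod int N3)))) = (\<Sum>k<N3. g (A i (c mod N2) k))"
      using sum.reindex_bij_betw[OF bij_sub2[OF assms(3), of "c div N2"], of "\<lambda>k. g (A i (c mod N2) k)"]
      by simp
  qed
  finally show ?thesis .
qed

lemma weighted_cs:
  fixes a y :: "'a \<Rightarrow> real"
  assumes "\<And>i. a i \<ge> 0"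
  shows "(\<Sum>i\<in>I. a i * y i)\<^sup>2 \<le> (\<Sum>i\<in>I. a i) * (\<Sum>i\<in>I. a i * (y i)\<^sup>2)"
proof -
  have "(\<Sum>i\<in>I. sqrt (a i) * (sqrt (a i) * y i))\<^sup>2
     \<le> (\<Sum>i\<in>I. (sqrt (a i))\<^sup>2) * (\<Sum>i\<in>I. (sqrt (a i) * y i)\<^sup>2)"
    by (rule Cauchy_Schwarz_ineq_sum)
  moreover have "\<And>i. sqrt (a i) * (sqrt (a i) * y i) = a i * y i"
    using assms by (simp add: mult.assoc[symmetric])
  moreover have "\<And>i. (sqrt (a i))\<^sup>2 = a i" using assms by simp
  moreover have "\<And>i. (sqrt (a i) * y i)\<^sup>2 = a i * (y i)\<^sup>2" using assms by (simp add: power_mult_distrib)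
  ultimately show ?thesis by simp
qed

lemma row_bound:
  fixes B :: "nat \<Rightarrow> nat \<Rightarrow> real"
  assumes rows: "\<And>r. r < m \<Longrightarrow> (\<Sum>c<n. \<bar>B r c\<bar>) \<le> d"
    and cols: "\<And>c. c < n \<Longrightarrow> (\<Sum>r<m. \<bar>B r c\<bar>) \<le> d"
    and d: "d \<ge> 0"
    and x: "(\<Sum>c<n. (x c)\<^sup>2) \<le> 1"
  shows "sqrt (\<Sum>r<m. (\<Sum>c<n. B r c * x c)\<^sup>2) \<le> d"
proof -
  have step: "(\<Sum>c<n. B r c * x c)\<^sup>2 \<le> d * (\<Sum>c<n. \<bar>B r c\<bar> * (x c)\<^sup>2)" if "r < m" for r
  proof -
    have "(\<Sum>c<n. B r c * x c)\<^sup>2 = \<bar>\<Sum>c<n. B r c * x c\<bar>\<^sup>2" by simp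
    also have "\<dots> \<le> (\<Sum>c<n. \<bar>B r c\<bar> * \<bar>x c\<bar>)\<^sup>2"
      by (rule power_mono) (auto intro: order_trans[OF sum_abs] simp: abs_mult)
    also have "\<dots> \<le> (\<Sum>c<n. \<bar>B r c\<bar>) * (\<Sum>c<n. \<bar>B r c\<bar> * \<bar>x c\<bar>\<^sup>2)"
      by (rule weighted_cs) simp
    also have "\<dots> \<le> d * (\<Sum>c<n. \<bar>B r c\<bar> * (x c)\<^sup>2)"
      by (auto intro!: mult_right_mono rows that sum_nonneg)
    finally show ?thesis .
  qed
  have "(\<Sum>r<m. (\<Sum>c<n. B r c * x c)\<^sup>2) \<le> (\<Sum>r<m. d * (\<Sum>c<n. \<bar>B r c\<bar> * (x c)\<^sup>2))"
    by (rule sum_mono) (rule step, simp)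
  also have "\<dots> = d * (\<Sum>c<n. (\<Sum>r<m. \<bar>B r c\<bar>) * (x c)\<^sup>2)"
    by (simp add: sum_distrib_left sum_distrib_right sum.swap[of _ "{..<m}"])
  also have "\<dots> \<le> d * (\<Sum>c<n. d * (x c)\<^sup>2)"
    by (intro mult_left_mono sum_mono mult_right_mono cols d) auto
  also have "\<dots> = d * d * (\<Sum>c<n. (x c)\<^sup>2)" by (simp add: sum_distrib_left mult.assoc)
  also have "\<dots> \<le> d * d * 1" using d x by (intro mult_left_mono) auto
  finally have "(\<Sum>r<m. (\<Sum>c<n. B r c * x c)\<^sup>2) \<le> d\<^sup>2" by (simp add: power2_eq_square)
  then show ?thesis using d real_sqrt_le_iff[of _ "d\<^sup>2"] by simp
qed

lemma spec_upper:
  fixes B :: "nat \<Rightarrow> nat \<Rightarrow> real"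
  assumes rows: "\<And>r. r < m \<Longrightarrow> (\<Sum>c<n. \<bar>B r c\<bar>) \<le> d"
    and cols: "\<And>c. c < n \<Longrightarrow> (\<Sum>r<m. \<bar>B r c\<bar>) \<le> d"
    and d: "d \<ge> 0"
  shows "mat_spec_norm m n B \<le> d"
  unfolding mat_spec_norm_def
proof (rule cSup_least)
  show "{sqrt (\<Sum>r<m. (\<Sum>c<n. B r c * x c)\<^sup>2) | x. (\<Sum>c<n. (x c)\<^sup>2) \<le> 1} \<noteq> {}"
  proof -
    have "sqrt (\<Sum>r<m. (\<Sum>c<n. B r c * (\<lambda>_. 0) c)\<^sup>2) \<in> {sqrt (\<Sum>r<m. (\<Sum>c<n. B r c * x c)\<^sup>2) | x. (\<Sum>c<n. (x c)\<^sup>2) \<le> 1}"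
      by (rule CollectI, rule exI[of _ "\<lambda>_. 0"]) simp
    then show ?thesis by blast
  qed
  show "\<And>y. y \<in> {sqrt (\<Sum>r<m. (\<Sum>c<n. B r c * x c)\<^sup>2) | x. (\<Sum>c<n. (x c)\<^sup>2) \<le> 1} \<Longrightarrow> y \<le> d"
    using row_bound[OF rows cols d] by blast
qed

lemma spec_lower:
  fixes B :: "nat \<Rightarrow> nat \<Rightarrow> real"
  assumes rows: "\<And>r. r < m \<Longrightarrow> (\<Sum>c<n. \<bar>B r c\<bar>) \<le> D"
    and cols: "\<And>c. c < n \<Longrightarrow> (\<Sum>r<m. \<bar>B r c\<bar>) \<le> D"
    and D: "D \<ge> 0"
    and rows2: "\<And>r. r < m \<Longrightarrow> (\<Sum>c<n. B r c) \<ge> d"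
    and cols2: "\<And>c. c < n \<Longrightarrow> (\<Sum>r<m. B r c) \<ge> d"
    and d: "d \<ge> 0" and m: "m > 0" and n: "n > 0"
  shows "d \<le> mat_spec_norm m n B"
proof -
  define x where "x = (\<lambda>c::nat. 1 / sqrt n)"
  define S where "S = (\<Sum>r<m. \<Sum>c<n. B r c)"
  have xn: "(\<Sum>c<n. (x c)\<^sup>2) \<le> 1" using n by (simp add: x_def power_divide)
  have bdd: "bdd_above {sqrt (\<Sum>r<m. (\<Sum>c<n. B r c * x c)\<^sup>2) | x. (\<Sum>c<n. (x c)\<^sup>2) \<le> 1}"
    using row_bound[OF rows cols D] by (auto simp: bdd_above_def)
  have le: "sqrt (\<Sum>r<m. (\<Sum>c<n. B r c * x c)\<^sup>2) \<le> mat_spec_norm m n B"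
    unfolding mat_spec_norm_def by (rule cSup_upper[OF _ bdd]) (use xn in blast)
  have S1: "S \<ge> m * d"
  proof -
    have "S \<ge> (\<Sum>r<m. d)" unfolding S_def by (rule sum_mono) (rule rows2, simp)
    then show ?thesis by simp
  qed
  have S2: "S \<ge> n * d"
  proof -
    have "S = (\<Sum>c<n. \<Sum>r<m. B r c)" unfolding S_def by (rule sum.swap)
    also have "\<dots> \<ge> (\<Sum>c<n. d)" by (rule sum_mono) (rule cols2, simp)
    finally show ?thesis by simp
  qed
  have Sn: "S \<ge> 0" proof -
    have "0 \<le> real m * d" using d by simp
    then show ?thesis using S1 by linarith
  qed
  have "(\<Sum>r<m. \<Sum>c<n. B r c * x c)\<^sup>2 \<le> (\<Sum>r<m. (\<Sum>c<n. B r c * x c)\<^sup>2) * m"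
    using sum_squared_le_sum_of_squares[of "\<lambda>r. \<Sum>c<n. B r c * x c" "{..<m}"] by simp
  moreover have "(\<Sum>r<m. \<Sum>c<n. B r c * x c) = S / sqrt n"
    by (simp add: S_def x_def sum_divide_distrib)
  ultimately have "(S / sqrt n)\<^sup>2 \<le> (\<Sum>r<m. (\<Sum>c<n. B r c * x c)\<^sup>2) * m" by simp
  then have "S\<^sup>2 / (n * m) \<le> (\<Sum>r<m. (\<Sum>c<n. B r c * x c)\<^sup>2)"
    using m n by (simp add: power_divide divide_le_eq field_simps)
  moreover have "d\<^sup>2 \<le> S\<^sup>2 / (n * m)"
  proof -
    have "(m * d) * (n * d) \<le> S * S"
      using S1 S2 d Sn by (intro mult_mono) auto
    then show ?thesis using m n by (simp add: le_divide_eq power2_eq_square field_simps)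
  qed
  ultimately have "d\<^sup>2 \<le> (\<Sum>r<m. (\<Sum>c<n. B r c * x c)\<^sup>2)" by linarith
  then have "d \<le> sqrt (\<Sum>r<m. (\<Sum>c<n. B r c * x c)\<^sup>2)"
    using d real_le_rsqrt by blast
  then show ?thesis using le by linarith
qed

lemma nnz_horiz_sum:
  "real (nnz_horiz N2 N3 E i) = (\<Sum>j<N2. \<Sum>k<N3. if E i j k \<noteq> 0 then 1 else 0)"
proof -
  have eq: "{(j, k). j < N2 \<and> k < N3 \<and> E i j k \<noteq> 0} = {x \<in> {..<N2}\<times>{..<N3}. E i (fst x) (snd x) \<noteq> 0}"
    by auto
  have "real (nnz_horiz N2 N3 E i) = (\<Sum>x\<in>{x \<in> {..<N2}\<times>{..<N3}. E i (fst x) (snd x) \<noteq> 0}. 1)"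
    unfolding nnz_horiz_def eq by simp
  also have "\<dots> = (\<Sum>x\<in>{..<N2}\<times>{..<N3}. if E i (fst x) (snd x) \<noteq> 0 then 1 else 0)"
    by (rule sum.inter_filter) simp
  also have "\<dots> = (\<Sum>j<N2. \<Sum>k<N3. if E i j k \<noteq> 0 then 1 else 0)"
    by (simp add: sum.cartesian_product split_def)
  finally show ?thesis .
qed

lemma nnz_lat_sum:
  "real (nnz_lat N1 N3 E j) = (\<Sum>i<N1. \<Sum>k<N3. if E i j k \<noteq> 0 then 1 else 0)"
proof -
  have eq: "{(i, k). i < N1 \<and> k < N3 \<and> E i j k \<noteq> 0} = {x \<in> {..<N1}\<times>{..<N3}. E (fst x) j (snd x) \<noteq> 0}"
    by auto
  have "real (nnz_lat N1 N3 E j) = (\<Sum>x\<in>{x \<in> {..<N1}\<times>{..<N3}. E (fst x) j (snd x) \<noteq> 0}. 1)"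
    unfolding nnz_lat_def eq by simp
  also have "\<dots> = (\<Sum>x\<in>{..<N1}\<times>{..<N3}. if E (fst x) j (snd x) \<noteq> 0 then 1 else 0)"
    by (rule sum.inter_filter) simp
  also have "\<dots> = (\<Sum>i<N1. \<Sum>k<N3. if E i j k \<noteq> 0 then 1 else 0)"
    by (simp add: sum.cartesian_product split_def)
  finally show ?thesis .
qed

lemma mu_facts:
  fixes N1 N2 N3 :: nat and E :: tensor3
  assumes "N1 \<ge> 1" and "N2 \<ge> 1" and "N3 \<ge> 1"
  shows "real (deg_min N1 N2 N3 E) \<le> mu N1 N2 N3 E \<and>
         mu N1 N2 N3 E \<le> real (deg_max N1 N2 N3 E)"
proof -
  have p1: "N1 > 0" and p2: "N2 > 0" and p3: "N3 > 0" using assms by auto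
  have fin: "finite (slice_counts N1 N2 N3 E)" by (simp add: slice_counts_def)
  have hmax: "nnz_horiz N2 N3 E i \<le> deg_max N1 N2 N3 E" if "i < N1" for i
    unfolding deg_max_def using fin that by (intro Max_ge) (auto simp: slice_counts_def)
  have lmax: "nnz_lat N1 N3 E j \<le> deg_max N1 N2 N3 E" if "j < N2" for j
    unfolding deg_max_def using fin that by (intro Max_ge) (auto simp: slice_counts_def)
  have hmin: "deg_min N1 N2 N3 E \<le> nnz_horiz N2 N3 E i" if "i < N1" for i
    unfolding deg_min_def using fin that by (intro Min_le) (auto simp: slice_counts_def)
  have lmin: "deg_min N1 N2 N3 E \<le> nnz_lat N1 N3 E j" if "j < N2" for j
    unfolding deg_min_def using fin that by (intro Min_le) (auto simp: slice_counts_def)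
  define D where "D = real (deg_max N1 N2 N3 E)"
  define m where "m = N1 * N3"
  define n where "n = N2 * N3"
  have rowsO: "(\<Sum>c<n. \<bar>bcirc N1 N2 N3 N r c\<bar>) \<le> D"
    if N: "N \<in> Omega_inf N1 N2 N3 E" and r: "r < m" for N r
  proof -
    have i: "r mod N1 < N1" using p1 by simp
    have "(\<Sum>c<n. \<bar>bcirc N1 N2 N3 N r c\<bar>) = (\<Sum>j<N2. \<Sum>k<N3. \<bar>N (r mod N1) j k\<bar>)"
      unfolding n_def by (rule row_sum[OF p1 p2 p3]) (use r m_def in simp)
    also have "\<dots> \<le> (\<Sum>j<N2. \<Sum>k<N3. if E (r mod N1) j k \<noteq> 0 then 1 else 0)"
      using N i by (intro sum_mono) (auto simp: Omega_inf_def)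
    also have "\<dots> = real (nnz_horiz N2 N3 E (r mod N1))" by (simp add: nnz_horiz_sum)
    also have "\<dots> \<le> D" unfolding D_def using hmax[OF i] by simp
    finally show ?thesis .
  qed
  have colsO: "(\<Sum>r<m. \<bar>bcirc N1 N2 N3 N r c\<bar>) \<le> D"
    if N: "N \<in> Omega_inf N1 N2 N3 E" and c: "c < n" for N c
  proof -
    have j: "c mod N2 < N2" using p2 by simp
    have "(\<Sum>r<m. \<bar>bcirc N1 N2 N3 N r c\<bar>) = (\<Sum>i<N1. \<Sum>k<N3. \<bar>N i (c mod N2) k\<bar>)"
      unfolding m_def by (rule col_sum[OF p1 p2 p3]) (use c n_def in simp)
    also have "\<dots> \<le> (\<Sum>i<N1. \<Sum>k<N3. if E i (c mod N2) k \<noteq> 0 then 1 else 0)"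
      using N j by (intro sum_mono) (auto simp: Omega_inf_def)
    also have "\<dots> = real (nnz_lat N1 N3 E (c mod N2))" by (simp add: nnz_lat_sum)
    also have "\<dots> \<le> D" unfolding D_def using lmax[OF j] by simp
    finally show ?thesis .
  qed
  have D0: "D \<ge> 0" by (simp add: D_def)
  have upO: "tensor_spec_norm N1 N2 N3 N \<le> D" if "N \<in> Omega_inf N1 N2 N3 E" for N
    unfolding tensor_spec_norm_def
    using spec_upper[OF _ _ D0, of m "bcirc N1 N2 N3 N" n] rowsO[OF that] colsO[OF that] m_def n_def by blast
  have ne: "Omega_inf N1 N2 N3 E \<noteq> {}"
  proof -
    have "(\<lambda>i j k. 0) \<in> Omega_inf N1 N2 N3 E" by (simp add: Omega_inf_def)
    then show ?thesis by blast
  qed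
  have up: "mu N1 N2 N3 E \<le> D"
    unfolding mu_def by (rule cSUP_least[OF ne upO])
  define N0 :: tensor3 where "N0 = (\<lambda>i j k. if E i j k \<noteq> 0 then 1 else 0)"
  have N0O: "N0 \<in> Omega_inf N1 N2 N3 E" by (simp add: Omega_inf_def N0_def)
  define d where "d = real (deg_min N1 N2 N3 E)"
  have rows2: "(\<Sum>c<n. bcirc N1 N2 N3 N0 r c) \<ge> d" if r: "r < m" for r
  proof -
    have i: "r mod N1 < N1" using p1 by simp
    have "(\<Sum>c<n. bcirc N1 N2 N3 N0 r c) = (\<Sum>j<N2. \<Sum>k<N3. N0 (r mod N1) j k)"
      unfolding n_def using row_sum[OF p1 p2 p3, of r "\<lambda>x. x"] r m_def by simp
    also have "\<dots> = real (nnz_horiz N2 N3 E (r mod N1))" by (simp add: nnz_horiz_sum N0_def)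
    finally show ?thesis unfolding d_def using hmin[OF i] by simp
  qed
  have cols2: "(\<Sum>r<m. bcirc N1 N2 N3 N0 r c) \<ge> d" if c: "c < n" for c
  proof -
    have j: "c mod N2 < N2" using p2 by simp
    have "(\<Sum>r<m. bcirc N1 N2 N3 N0 r c) = (\<Sum>i<N1. \<Sum>k<N3. N0 i (c mod N2) k)"
      unfolding m_def using col_sum[OF p1 p2 p3, of c "\<lambda>x. x"] c n_def by simp
    also have "\<dots> = real (nnz_lat N1 N3 E (c mod N2))" by (simp add: nnz_lat_sum N0_def)
    finally show ?thesis unfolding d_def using lmin[OF j] by simp
  qed
  have "d \<le> tensor_spec_norm N1 N2 N3 N0"
    unfolding tensor_spec_norm_def
  proof -
    have "m > 0" "n > 0" using p1 p2 p3 m_def n_def by auto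
    moreover have "d \<ge> 0" using d_def by simp
    ultimately have "d \<le> mat_spec_norm m n (bcirc N1 N2 N3 N0)"
      using spec_lower[OF _ _ D0, of m "bcirc N1 N2 N3 N0" n d] rowsO[OF N0O] colsO[OF N0O] rows2 cols2
      by blast
    then show "d \<le> mat_spec_norm (N1 * N3) (N2 * N3) (bcirc N1 N2 N3 N0)" using m_def n_def by simp
  qed
  also have "\<dots> \<le> mu N1 N2 N3 E"
    unfolding mu_def by (rule cSUP_upper[OF N0O]) (use upO in \<open>auto simp: bdd_above_def\<close>)
  finally show ?thesis using up d_def D_def by simp
qed

theorem lemma4:
  fixes N1 N2 N3 :: nat and E :: tensor3
  assumes "N1 \<ge> 1" and "N2 \<ge> 1" and "N3 \<ge> 1"
  shows "real (deg_min N1 N2 N3 E) \<le> mu N1 N2 N3 E \<and>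
         mu N1 N2 N3 E \<le> real (deg_max N1 N2 N3 E)"
  using mu_facts[OF assms] .

end
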